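(* There exist Pauli Hamiltonians $H$, with $m$ (the number of groups of the sorted insertion grouping) arbitrarily large, such that sorted insertion produces a grouping $\mathcal{G}$ of $H$ with $m$ groups and there is another grouping $\mathcal{G}'$ of $H$ with $V(\mathcal{G})/V(\mathcal{G}')=\Theta(m)$, where for a grouping $\mathcal{G}=(G^{[1]},\dots,G^{[k]})$ and fixed total budget $M$, $V(\mathcal{G})=\min\{\sum_jS_j/M_j:\ M_j>0,\ \sum_jM_j=M\}=(\sum_j\sqrt{S_j})^2/M$ with $S_j=\sum_{i:P_i\in G^{[j]}}c_i^2$.
   Context: A Pauli Hamiltonian is $H=\sum_{i=1}^Nc_iP_i$ with real nonzero $c_i$ and distinct $n$-qubit Pauli strings. A grouping is a list of pairwise disjoint sets of mutually commuting Pauli terms of $H$ covering all terms. Sorted insertion: order the terms by decreasing $|c_i|$ and insert each in turn into the first existing group whose members all commute with it, creating a new group otherwise. $V(\mathcal{G})$ is the variance of the grouped energy estimator under optimal allocation of $M$ shots across groups in the state-independent model where each Pauli has variance $1$ and all covariances vanish (as for the maximally mixed state). *)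

theory Defs
  imports Complex_Main
begin

datatype pauli = PI | PX | PY | PZ

type_synonym pstring = "pauli list"

text \<open>Two Pauli strings commute iff the number of positions where both are
non-identity and different is even.\<close>
definition anticomm_count :: "pstring \<Rightarrow> pstring \<Rightarrow> nat" where
  "anticomm_count P Q =
     length (filter (\<lambda>(a,b). a \<noteq> PI \<and> b \<noteq> PI \<and> a \<noteq> b) (zip P Q))"

definition commute :: "pstring \<Rightarrow> pstring \<Rightarrow> bool" where
  "commute P Q \<longleftrightarrow> even (anticomm_count P Q)"

text \<open>A Pauli Hamiltonian H = sum over P in T of c P * P: T is a finite set of
distinct n-qubit Pauli strings, each with a real nonzero coefficient.\<close>
definition pauli_hamiltonian :: "nat \<Rightarrow> pstring set \<Rightarrow> (pstring \<Rightarrow> real) \<Rightarrow> bool" where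
  "pauli_hamiltonian n T c \<longleftrightarrow> finite T \<and> T \<noteq> {} \<and>
     (\<forall>P\<in>T. length P = n \<and> c P \<noteq> 0)"

definition grouping :: "pstring set \<Rightarrow> pstring set list \<Rightarrow> bool" where
  "grouping T G \<longleftrightarrow>
     (\<forall>j<length G. G ! j \<noteq> {} \<and> (\<forall>P\<in>G ! j. \<forall>Q\<in>G ! j. commute P Q)) \<and>
     (\<forall>i<length G. \<forall>j<length G. i \<noteq> j \<longrightarrow> G ! i \<inter> G ! j = {}) \<and>
     (\<Union>j<length G. G ! j) = T"

fun si_insert :: "pstring \<Rightarrow> pstring set list \<Rightarrow> pstring set list" where
  "si_insert P [] = [{P}]"
| "si_insert P (g # gs) =
     (if (\<forall>Q\<in>g. commute P Q) then insert P g # gs else g # si_insert P gs)"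

definition sorted_insertion :: "pstring list \<Rightarrow> pstring set list" where
  "sorted_insertion xs = fold si_insert xs []"

definition sorted_order :: "pstring set \<Rightarrow> (pstring \<Rightarrow> real) \<Rightarrow> pstring list \<Rightarrow> bool" where
  "sorted_order T c xs \<longleftrightarrow> distinct xs \<and> set xs = T \<and>
     sorted_wrt (\<lambda>P Q. \<bar>c P\<bar> \<ge> \<bar>c Q\<bar>) xs"

definition grp_S :: "(pstring \<Rightarrow> real) \<Rightarrow> pstring set \<Rightarrow> real" where
  "grp_S c g = (\<Sum>P\<in>g. (c P)\<^sup>2)"

definition Var :: "(pstring \<Rightarrow> real) \<Rightarrow> real \<Rightarrow> pstring set list \<Rightarrow> real" where
  "Var c M G = Inf {(\<Sum>j<length G. grp_S c (G ! j) / Mj j) | Mj.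
       (\<forall>j<length G. Mj j > 0) \<and> (\<Sum>j<length G. Mj j) = M}"

end

theory Submission
  imports Defs
begin


definition bad :: "pauli \<Rightarrow> pauli \<Rightarrow> bool" where
  "bad a b \<longleftrightarrow> a \<noteq> PI \<and> b \<noteq> PI \<and> a \<noteq> b"

lemma ac_map:
  "anticomm_count (map f [0..<n]) (map g [0..<n]) = card {i. i < n \<and> bad (f i) (g i)}"
  unfolding anticomm_count_def
  by (simp add: zip_map_map zip_same_conv_map filter_map length_filter_conv_card o_def bad_def cong: conj_cong)

definition dq :: "nat \<Rightarrow> nat \<Rightarrow> nat \<Rightarrow> pauli" where
  "dq m k i = (if i < k then PZ else if i = k then PX else if i = m + k then PX else PI)"
definition cq :: "nat \<Rightarrow> nat \<Rightarrow> nat \<Rightarrow> nat \<Rightarrow> pauli" where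
  "cq m j l i = (if m \<le> i \<and> i < 2*m \<and> i \<noteq> m + j then PZ else if i = 2*m + l then PZ else PI)"

definition pD :: "nat \<Rightarrow> nat \<Rightarrow> pstring" where
  "pD m k = map (dq m k) [0..<3*m]"
definition pC :: "nat \<Rightarrow> nat \<Rightarrow> nat \<Rightarrow> pstring" where
  "pC m j l = map (cq m j l) [0..<3*m]"

lemma DD_set: "k < m \<Longrightarrow> k' < m \<Longrightarrow> k \<noteq> k' \<Longrightarrow>
  {i. i < 3*m \<and> bad (dq m k i) (dq m k' i)} = {min k k'}"
  by (auto simp: bad_def dq_def split: if_splits)

lemma DD_anti: "k < m \<Longrightarrow> k' < m \<Longrightarrow> k \<noteq> k' \<Longrightarrow> \<not> commute (pD m k) (pD m k')"
  by (simp add: commute_def pD_def ac_map DD_set)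

lemma CD_set: "k < m \<Longrightarrow> j < m \<Longrightarrow>
  {i. i < 3*m \<and> bad (cq m j l i) (dq m k i)} = (if k = j then {} else {m+k})"
  by (auto simp: bad_def dq_def cq_def split: if_splits)

lemma CD_comm: "k < m \<Longrightarrow> j < m \<Longrightarrow> commute (pC m j l) (pD m k) \<longleftrightarrow> k = j"
  by (simp add: commute_def pC_def pD_def ac_map CD_set)

lemma DC_comm: "k < m \<Longrightarrow> j < m \<Longrightarrow> commute (pD m k) (pC m j l) \<longleftrightarrow> k = j"
proof -
  assume a: "k < m" "j < m"
  have "{i. i < 3*m \<and> bad (dq m k i) (cq m j l i)} = {i. i < 3*m \<and> bad (cq m j l i) (dq m k i)}"
    by (auto simp: bad_def)
  then show ?thesis using a by (simp add: commute_def pC_def pD_def ac_map CD_set)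
qed

lemma CC_comm: "commute (pC m j l) (pC m j' l')"
proof -
  have h: "{i. i < 3*m \<and> bad (cq m j l i) (cq m j' l' i)} = {}"
    by (auto simp: bad_def cq_def split: if_splits)
  show ?thesis unfolding commute_def pC_def ac_map by (subst h) simp
qed

lemma DD_self: "commute (pD m k) (pD m k)"
  by (simp add: commute_def pD_def ac_map bad_def)

lemma map_nth_eq: "map f [0..<n] = map g [0..<n] \<Longrightarrow> i < n \<Longrightarrow> f i = g i"
  by (simp add: map_eq_conv)

lemma D_inj: "k < m \<Longrightarrow> k' < m \<Longrightarrow> pD m k = pD m k' \<Longrightarrow> k = k'"
  unfolding pD_def
  apply (drule map_nth_eq[where i="min k k'"]) apply simp
  by (auto simp: dq_def split: if_splits)

lemma C_inj: "j < m \<Longrightarrow> l < m \<Longrightarrow> j' < m \<Longrightarrow> l' < m \<Longrightarrow> pC m j l = pC m j' l' \<Longrightarrow> j = j' \<and> l = l'"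
  unfolding pC_def
  apply (frule map_nth_eq[where i="m+j"]) apply simp
  apply (frule map_nth_eq[where i="m+j'"]) apply simp
  apply (frule map_nth_eq[where i="2*m+l"]) apply simp
  apply (drule map_nth_eq[where i="2*m+l'"]) apply simp
  by (auto simp: cq_def split: if_splits)

lemma DC_neq: "k < m \<Longrightarrow> pD m k \<noteq> pC m j l"
  unfolding pD_def pC_def
  apply (rule notI) apply (drule map_nth_eq[where i=k]) apply simp
  by (auto simp: dq_def cq_def split: if_splits)



lemma si_new: "(\<forall>g\<in>set gs. \<exists>Q\<in>g. \<not> commute P Q) \<Longrightarrow> si_insert P gs = gs @ [{P}]"
  by (induction gs) auto

lemma phase1: "distinct (ks0 @ ks) \<Longrightarrow> set (ks0 @ ks) \<subseteq> {..<m} \<Longrightarrow>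
  fold si_insert (map (pD m) ks) (map (\<lambda>k. insert (pD m k) {}) ks0) = map (\<lambda>k. insert (pD m k) {}) (ks0 @ ks)"
proof (induction ks arbitrary: ks0)
  case Nil
  then show ?case by simp
next
  case (Cons k ks)
  have "si_insert (pD m k) (map (\<lambda>k. insert (pD m k) {}) ks0) = map (\<lambda>k. insert (pD m k) {}) ks0 @ [{pD m k}]"
  proof (rule si_new, intro ballI)
    fix g assume "g \<in> set (map (\<lambda>k. insert (pD m k) {}) ks0)"
    then obtain k' where k': "k' \<in> set ks0" "g = {pD m k'}" by auto
    then have "k' < m" "k' \<noteq> k" "k < m" using Cons.prems by auto
    then show "\<exists>Q\<in>g. \<not> commute (pD m k) Q" using k' DD_anti by auto
  qed
  then have "fold si_insert (map (pD m) (k # ks)) (map (\<lambda>k. insert (pD m k) {}) ks0)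
     = fold si_insert (map (pD m) ks) (map (\<lambda>k. insert (pD m k) {}) (ks0 @ [k]))" by simp
  also have "\<dots> = map (\<lambda>k. insert (pD m k) {}) ((ks0 @ [k]) @ ks)"
    by (rule Cons.IH) (use Cons.prems in auto)
  finally show ?case by simp
qed

lemma si_C: "distinct ks \<Longrightarrow> set ks \<subseteq> {..<m} \<Longrightarrow> j \<in> set ks \<Longrightarrow>
  \<forall>k\<in>set ks. \<forall>P\<in>F k. \<exists>a b. P = pC m a b \<Longrightarrow>
  si_insert (pC m j l) (map (\<lambda>k. insert (pD m k) (F k)) ks)
   = map (\<lambda>k. insert (pD m k) ((F(j := insert (pC m j l) (F j))) k)) ks"
proof (induction ks)
  case Nil
  then show ?case by simp
next
  case (Cons k ks)
  have jm: "j < m" using Cons.prems by auto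
  show ?case
  proof (cases "k = j")
    case True
    have c: "\<forall>Q\<in>insert (pD m k) (F k). commute (pC m j l) Q"
      using Cons.prems True jm by (auto simp: CD_comm CC_comm)
    have "map (\<lambda>k. insert (pD m k) (F k)) ks = map (\<lambda>k. insert (pD m k) ((F(j := insert (pC m j l) (F j))) k)) ks"
      using Cons.prems True by auto
    then show ?thesis using c True by auto
  next
    case False
    have km: "k < m" using Cons.prems by auto
    have c: "\<not> commute (pC m j l) (pD m k)"
      using False jm km by (simp add: CD_comm)
    have "si_insert (pC m j l) (map (\<lambda>k. insert (pD m k) (F k)) ks)
   = map (\<lambda>k. insert (pD m k) ((F(j := insert (pC m j l) (F j))) k)) ks"
      by (rule Cons.IH) (use Cons.prems False in auto)
    then show ?thesis using c False by simp
  qed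
qed

lemma phase2: "distinct ks \<Longrightarrow> set ks = {..<m} \<Longrightarrow>
  \<forall>k\<in>set ks. \<forall>P\<in>F k. \<exists>a b. P = pC m a b \<Longrightarrow>
  \<forall>x\<in>set cs. \<exists>a<m. \<exists>b<m. x = pC m a b \<Longrightarrow>
  fold si_insert cs (map (\<lambda>k. insert (pD m k) (F k)) ks)
   = map (\<lambda>k. insert (pD m k) (F k \<union> (set cs \<inter> pC m k ` {..<m}))) ks"
proof (induction cs arbitrary: F)
  case Nil
  then show ?case by simp
next
  case (Cons x cs)
  obtain a b where ab: "a < m" "b < m" "x = pC m a b" using Cons.prems by auto
  define F' where "F' = F(a := insert (pC m a b) (F a))"
  have "si_insert x (map (\<lambda>k. insert (pD m k) (F k)) ks) = map (\<lambda>k. insert (pD m k) (F' k)) ks"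
    unfolding F'_def ab(3) by (rule si_C) (use Cons.prems ab in auto)
  then have "fold si_insert (x # cs) (map (\<lambda>k. insert (pD m k) (F k)) ks)
     = fold si_insert cs (map (\<lambda>k. insert (pD m k) (F' k)) ks)" by simp
  also have "\<dots> = map (\<lambda>k. insert (pD m k) (F' k \<union> (set cs \<inter> pC m k ` {..<m}))) ks"
    by (rule Cons.IH) (use Cons.prems ab in \<open>auto simp: F'_def\<close>)
  also have "\<dots> = map (\<lambda>k. insert (pD m k) (F k \<union> (set (x # cs) \<inter> pC m k ` {..<m}))) ks"
  proof (rule map_cong[OF refl])
    fix k assume "k \<in> set ks"
    then have km: "k < m" using Cons.prems by auto
    show "insert (pD m k) (F' k \<union> (set cs \<inter> pC m k ` {..<m})) =
          insert (pD m k) (F k \<union> (set (x # cs) \<inter> pC m k ` {..<m}))"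
    proof (cases "k = a")
      case True
      then show ?thesis using ab by (auto simp: F'_def)
    next
      case False
      have "x \<notin> pC m k ` {..<m}" using ab km False C_inj by blast
      then show ?thesis using False by (auto simp: F'_def)
    qed
  qed
  finally show ?case .
qed

lemma split_sorted: "sorted_wrt R xs \<Longrightarrow> (\<forall>x\<in>set xs. \<forall>y\<in>set xs. \<not> p x \<longrightarrow> p y \<longrightarrow> \<not> R x y) \<Longrightarrow>
  xs = filter p xs @ filter (\<lambda>x. \<not> p x) xs"
proof (induction xs)
  case Nil
  then show ?case by simp
next
  case (Cons x xs)
  show ?case
  proof (cases "p x")
    case True
    then show ?thesis using Cons by simp
  next
    case False
    then have "\<forall>y\<in>set xs. \<not> p y" using Cons.prems by auto
    then show ?thesis using False by (simp add: filter_id_conv)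
  qed
qed

lemma term_bound:
  fixes S x t :: real assumes "S \<ge> 0" "x > 0"
  shows "S / x \<ge> 2 * t * sqrt S - t^2 * x"
proof -
  have "S / x - (2 * t * sqrt S - t^2 * x) = (sqrt S - t * x)^2 / x"
    using assms by (simp add: field_simps power2_eq_square)
  moreover have "(sqrt S - t * x)^2 / x \<ge> 0" using assms by simp
  ultimately show ?thesis by linarith
qed

lemma var_formula:
  fixes S :: "nat \<Rightarrow> real" assumes N: "N > 0" and S: "\<forall>j<N. S j > 0" and M: "M > 0"
  shows "Inf {(\<Sum>j<N. S j / Mj j) | Mj. (\<forall>j<N. Mj j > 0) \<and> (\<Sum>j<N. Mj j) = M}
     = (\<Sum>j<N. sqrt (S j))^2 / M"
proof (rule cInf_eq_minimum)
  define Q where "Q = (\<Sum>j<N. sqrt (S j))"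
  have Qpos: "Q > 0" unfolding Q_def using N S
    by (intro sum_pos) auto
  define Mo where "Mo = (\<lambda>j. M * sqrt (S j) / Q)"
  have "(\<Sum>j<N. Mo j) = M * Q / Q" unfolding Mo_def Q_def
    by (simp add: sum_divide_distrib[symmetric] sum_distrib_left)
  then have sMo: "(\<Sum>j<N. Mo j) = M" using Qpos by simp
  have "(\<Sum>j<N. S j / Mo j) = (\<Sum>j<N. sqrt (S j) * Q / M)"
  proof (rule sum.cong[OF refl])
    fix j assume "j \<in> {..<N}"
    then have "S j > 0" using S by auto
    then have "S j = sqrt (S j) * sqrt (S j)" by simp
    then show "S j / Mo j = sqrt (S j) * Q / M" unfolding Mo_def using Qpos M \<open>S j > 0\<close>
      by (simp add: field_simps)
  qed
  also have "\<dots> = Q^2 / M" by (simp add: Q_def sum_divide_distrib[symmetric] sum_distrib_right[symmetric] power2_eq_square)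
  finally have "(\<Sum>j<N. S j / Mo j) = Q^2 / M" .
  moreover have "\<forall>j<N. Mo j > 0" using S M Qpos by (simp add: Mo_def)
  ultimately show "(\<Sum>j<N. sqrt (S j))^2 / M \<in> {(\<Sum>j<N. S j / Mj j) | Mj. (\<forall>j<N. Mj j > 0) \<and> (\<Sum>j<N. Mj j) = M}"
    using sMo unfolding Q_def mem_Collect_eq by (intro exI[of _ Mo]) simp
  fix y assume "y \<in> {(\<Sum>j<N. S j / Mj j) | Mj. (\<forall>j<N. Mj j > 0) \<and> (\<Sum>j<N. Mj j) = M}"
  then obtain Mj where y: "y = (\<Sum>j<N. S j / Mj j)" and pos: "\<forall>j<N. Mj j > 0" and sM: "(\<Sum>j<N. Mj j) = M"
    by blast
  define t where "t = Q / M"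
  have "(\<Sum>j<N. 2 * t * sqrt (S j) - t^2 * Mj j) \<le> y"
    unfolding y using S pos by (intro sum_mono term_bound) auto
  moreover have "(\<Sum>j<N. 2 * t * sqrt (S j) - t^2 * Mj j) = 2 * t * Q - t^2 * M"
    by (simp add: sum_subtractf sum_distrib_left[symmetric] Q_def sM)
  moreover have "2 * t * Q - t^2 * M = Q^2 / M" unfolding t_def using M
    by (simp add: field_simps power2_eq_square)
  ultimately show "(\<Sum>j<N. sqrt (S j))^2 / M \<le> y" unfolding Q_def by simp
qed



lemma ex_map_P: "\<forall>y\<in>set ys. \<exists>x. P x \<and> y = f x \<Longrightarrow> \<exists>xs. ys = map f xs \<and> (\<forall>x\<in>set xs. P x)"
proof (induction ys)
  case Nil then show ?case by simp
next
  case (Cons y ys)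
  then obtain xs where "ys = map f xs" "\<forall>x\<in>set xs. P x" by auto
  moreover obtain x where "P x" "y = f x" using Cons.prems by auto
  ultimately show ?case by (intro exI[of _ "x # xs"]) auto
qed

lemma Var_eq:
  assumes "length G > 0" "\<forall>j<length G. grp_S c (G ! j) > 0" "M > 0"
  shows "Var c M G = (\<Sum>j<length G. sqrt (grp_S c (G ! j)))^2 / M"
  unfolding Var_def using var_formula[of "length G" "\<lambda>j. grp_S c (G ! j)" M] assms by simp

theorem lemma2:
  shows "\<exists>a b :: real. 0 < a \<and> 0 < b \<and>
    (\<forall>m0 :: nat. \<exists>m n T c. m \<ge> m0 \<and> pauli_hamiltonian n T c \<and>
       (\<forall>xs. sorted_order T c xs \<longrightarrow>
          length (sorted_insertion xs) = m \<and>
          (\<exists>G'. grouping T G' \<and>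
             (\<forall>M :: real. M > 0 \<longrightarrow>
                a * real m \<le> Var c M (sorted_insertion xs) / Var c M G' \<and>
                Var c M (sorted_insertion xs) / Var c M G' \<le> b * real m))))"
proof (rule exI[of _ "1/9::real"], rule exI[of _ "5/9::real"], intro conjI allI)
  show "(0::real) < 1/9" by simp
  show "(0::real) < 5/9" by simp
next
  fix m0 :: nat
  define m where "m = Suc m0"
  have m1: "m \<ge> 1" unfolding m_def by simp
  define Dset where "Dset = pD m ` {..<m}"
  define Cf where "Cf = (\<lambda>k. pC m k ` {..<m})"
  define Call where "Call = (\<lambda>(a,b). pC m a b) ` ({..<m} \<times> {..<m})"
  define T where "T = Dset \<union> Call"
  define c where "c = (\<lambda>P. if P \<in> Dset then 2 else 1 :: real)"
  have DnC: "Dset \<inter> Call = {}" unfolding Dset_def Call_def using DC_neq by fastforce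
  have cD: "\<And>k. k < m \<Longrightarrow> c (pD m k) = 2" unfolding c_def Dset_def by auto
  have cC: "\<And>a b. a < m \<Longrightarrow> b < m \<Longrightarrow> c (pC m a b) = 1"
  proof -
    fix a b assume "a < m" "b < m"
    then have "pC m a b \<in> Call" unfolding Call_def by auto
    then have "pC m a b \<notin> Dset" using DnC by auto
    then show "c (pC m a b) = 1" unfolding c_def by simp
  qed
  have finT: "finite T" unfolding T_def Dset_def Call_def by simp
  have ph: "pauli_hamiltonian (3*m) T c"
    unfolding pauli_hamiltonian_def
  proof (intro conjI finT)
    have "pD m 0 \<in> T" unfolding T_def Dset_def using m1 by auto
    then show "T \<noteq> {}" by auto
    show "\<forall>P\<in>T. length P = 3 * m \<and> c P \<noteq> 0"
      unfolding T_def Dset_def Call_def c_def by (auto simp: pD_def pC_def)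
  qed
  have injC: "inj_on (pC m k) {..<m}" if "k < m" for k
    using C_inj that by (auto simp: inj_on_def)
  have cardCf: "card (Cf k) = m" if "k < m" for k
    unfolding Cf_def using card_image[OF injC[OF that]] by simp
  have SG: "grp_S c (insert (pD m k) (Cf k)) = 4 + real m" if k: "k < m" for k
  proof -
    have nin: "pD m k \<notin> Cf k" unfolding Cf_def using DC_neq k by auto
    have "grp_S c (insert (pD m k) (Cf k)) = (c (pD m k))^2 + (\<Sum>P\<in>Cf k. (c P)^2)"
      unfolding grp_S_def Cf_def using nin Cf_def by simp
    also have "(\<Sum>P\<in>Cf k. (c P)^2) = (\<Sum>P\<in>Cf k. 1)"
      by (rule sum.cong) (use k cC in \<open>auto simp: Cf_def\<close>)
    finally show ?thesis using cardCf[OF k] cD[OF k] by simp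
  qed
  define G' where "G' = Call # map (\<lambda>k. {pD m k}) [0..<m]"
  have lenG': "length G' = Suc m" unfolding G'_def by simp
  have G'0: "G' ! 0 = Call" unfolding G'_def by simp
  have G'S: "\<And>j. j < m \<Longrightarrow> G' ! Suc j = {pD m j}" unfolding G'_def by simp
  have grp: "grouping T G'"
    unfolding grouping_def
  proof (intro conjI allI impI)
    fix j assume j: "j < length G'"
    show "G' ! j \<noteq> {}"
    proof (cases j)
      case 0
      have "pC m 0 0 \<in> Call" unfolding Call_def using m1 by auto
      then show ?thesis using G'0 0 by auto
    next
      case (Suc j') then show ?thesis using G'S j lenG' by auto
    qed
    show "\<forall>P\<in>G' ! j. \<forall>Q\<in>G' ! j. commute P Q"
    proof (cases j)
      case 0 then show ?thesis using G'0 unfolding Call_def by (auto simp: CC_comm)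
    next
      case (Suc j') then show ?thesis using G'S j lenG' by (auto simp: DD_self)
    qed
  next
    fix i j assume i: "i < length G'" and j: "j < length G'" and ij: "i \<noteq> j"
    show "G' ! i \<inter> G' ! j = {}"
    proof (cases i)
      case 0
      then obtain j' where "j = Suc j'" using ij by (cases j) auto
      then show ?thesis using 0 G'0 G'S j lenG' DnC unfolding Dset_def by auto
    next
      case (Suc i')
      show ?thesis
      proof (cases j)
        case 0 then show ?thesis using Suc G'0 G'S i lenG' DnC unfolding Dset_def by auto
      next
        case (Suc j')
        then show ?thesis using \<open>i = Suc i'\<close> G'S i j lenG' ij D_inj by auto
      qed
    qed
  next
    show "(\<Union>j<length G'. G' ! j) = T"
    proof
      show "(\<Union>j<length G'. G' ! j) \<subseteq> T"
      proof
        fix x assume "x \<in> (\<Union>j<length G'. G' ! j)"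
        then obtain j where j: "j < Suc m" "x \<in> G' ! j" using lenG' by auto
        then show "x \<in> T" using G'0 G'S unfolding T_def Dset_def
          by (cases j) auto
      qed
      show "T \<subseteq> (\<Union>j<length G'. G' ! j)"
      proof
        fix x assume "x \<in> T"
        then show "x \<in> (\<Union>j<length G'. G' ! j)"
          unfolding T_def
        proof
          assume "x \<in> Dset"
          then obtain k where k: "k < m" "x = pD m k" unfolding Dset_def by auto
          then have "x \<in> G' ! Suc k" using G'S by auto
          then show ?thesis using k lenG' by auto
        next
          assume "x \<in> Call"
          then show ?thesis using G'0 lenG' by auto
        qed
      qed
    qed
  qed
  have cardCall: "card Call = m * m"
  proof -
    have "inj_on (\<lambda>(a,b). pC m a b) ({..<m} \<times> {..<m})"
      using C_inj by (auto simp: inj_on_def)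
    then show ?thesis unfolding Call_def by (simp add: card_image card_cartesian_product)
  qed
  have SCall: "grp_S c Call = real m * real m"
  proof -
    have "grp_S c Call = (\<Sum>P\<in>Call. 1)"
      unfolding grp_S_def by (rule sum.cong) (auto simp: Call_def cC)
    then show ?thesis using cardCall by simp
  qed
  have VG': "Var c M G' = (3 * real m)^2 / M" if M: "M > 0" for M
  proof -
    have pos: "\<forall>j<length G'. grp_S c (G' ! j) > 0"
    proof (intro allI impI)
      fix j assume "j < length G'"
      then show "grp_S c (G' ! j) > 0" using G'0 G'S lenG' SCall m1 cD
        by (cases j) (auto simp: grp_S_def)
    qed
    have "(\<Sum>j<length G'. sqrt (grp_S c (G' ! j))) = sqrt (grp_S c (G' ! 0)) + (\<Sum>j<m. sqrt (grp_S c (G' ! Suc j)))"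
      unfolding lenG' by (rule sum.lessThan_Suc_shift)
    also have "(\<Sum>j<m. sqrt (grp_S c (G' ! Suc j))) = (\<Sum>j<m. 2)"
      by (rule sum.cong) (auto simp: G'S grp_S_def cD)
    also have "sqrt (grp_S c (G' ! 0)) = real m" using G'0 SCall by simp
    finally have "(\<Sum>j<length G'. sqrt (grp_S c (G' ! j))) = 3 * real m" by simp
    then show ?thesis using Var_eq[of G' c M] pos M lenG' by simp
  qed
  show "\<exists>m n T c. m \<ge> m0 \<and> pauli_hamiltonian n T c \<and>
       (\<forall>xs. sorted_order T c xs \<longrightarrow>
          length (sorted_insertion xs) = m \<and>
          (\<exists>G'. grouping T G' \<and>
             (\<forall>M :: real. M > 0 \<longrightarrow>
                1/9 * real m \<le> Var c M (sorted_insertion xs) / Var c M G' \<and>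
                Var c M (sorted_insertion xs) / Var c M G' \<le> 5/9 * real m)))"
  proof (rule exI[of _ m], rule exI[of _ "3*m"], rule exI[of _ T], rule exI[of _ c], intro conjI ph allI impI)
    show "m0 \<le> m" unfolding m_def by simp
    fix xs assume so: "sorted_order T c xs"
    define ds where "ds = filter (\<lambda>P. P \<in> Dset) xs"
    define cs where "cs = filter (\<lambda>P. P \<notin> Dset) xs"
    have dx: "distinct xs" "set xs = T" and sw: "sorted_wrt (\<lambda>P Q. \<bar>c P\<bar> \<ge> \<bar>c Q\<bar>) xs"
      using so unfolding sorted_order_def by auto
    have xs_eq: "xs = ds @ cs" unfolding ds_def cs_def
      by (rule split_sorted[OF sw]) (auto simp: c_def)
    have "\<forall>y\<in>set ds. \<exists>k. k < m \<and> y = pD m k" unfolding ds_def Dset_def by auto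
    then obtain ks where ks: "ds = map (pD m) ks" "\<forall>k\<in>set ks. k < m"
      using ex_map_P[of ds "\<lambda>k. k < m" "pD m"] by auto
    have injD: "inj_on (pD m) {..<m}" using D_inj by (auto simp: inj_on_def)
    have "distinct ds" unfolding ds_def using dx by simp
    then have dks: "distinct ks" using ks by (simp add: distinct_map)
    have sks: "set ks = {..<m}"
    proof
      show "set ks \<subseteq> {..<m}" using ks by auto
      show "{..<m} \<subseteq> set ks"
      proof
        fix k assume k: "k \<in> {..<m}"
        then have "pD m k \<in> set ds" unfolding ds_def using dx unfolding T_def Dset_def by auto
        then obtain k' where k': "k' \<in> set ks" "pD m k = pD m k'" using ks by auto
        then have "k' < m" using ks by auto
        then have "k = k'" using D_inj[of k m k'] k k' by simp
        then show "k \<in> set ks" using k' by simp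
      qed
    qed
    have scs: "set cs = Call" unfolding cs_def using dx DnC unfolding T_def by auto
    have ph1: "fold si_insert ds [] = map (\<lambda>k. insert (pD m k) ({}::pstring set)) ks"
      using phase1[of "[]" ks m] dks sks ks by simp
    have ph2: "fold si_insert cs (map (\<lambda>k. insert (pD m k) ((\<lambda>_. {}) k)) ks)
      = map (\<lambda>k. insert (pD m k) ((\<lambda>_. {}) k \<union> (set cs \<inter> pC m k ` {..<m}))) ks"
      by (rule phase2) (use dks sks scs in \<open>auto simp: Call_def\<close>)
    have SI: "sorted_insertion xs = map (\<lambda>k. insert (pD m k) (Cf k)) ks"
    proof -
      have "sorted_insertion xs = fold si_insert cs (fold si_insert ds [])"
        unfolding sorted_insertion_def by (subst xs_eq) simp
      also have "\<dots> = map (\<lambda>k. insert (pD m k) (set cs \<inter> pC m k ` {..<m})) ks"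
        using ph1 ph2 by simp
      also have "\<dots> = map (\<lambda>k. insert (pD m k) (Cf k)) ks"
        using sks scs by (auto simp: Cf_def Call_def)
      finally show ?thesis .
    qed
    have lks: "length ks = m" using distinct_card[OF dks] sks by simp
    show "length (sorted_insertion xs) = m" using SI lks by simp
    have VG: "Var c M (sorted_insertion xs) = (real m * sqrt (4 + real m))^2 / M" if M: "M > 0" for M
    proof -
      have Sj: "grp_S c (sorted_insertion xs ! j) = 4 + real m" if "j < m" for j
      proof -
        have "ks ! j < m" using ks that lks by auto
        then show ?thesis using SI that lks SG by simp
      qed
      have "(\<Sum>j<length (sorted_insertion xs). sqrt (grp_S c (sorted_insertion xs ! j))) = (\<Sum>j<m. sqrt (4 + real m))"
        using SI lks Sj by simp
      then show ?thesis using Var_eq[of "sorted_insertion xs" c M] M SI lks Sj m1 by simp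
    qed
    show "\<exists>G'. grouping T G' \<and>
             (\<forall>M :: real. M > 0 \<longrightarrow>
                1/9 * real m \<le> Var c M (sorted_insertion xs) / Var c M G' \<and>
                Var c M (sorted_insertion xs) / Var c M G' \<le> 5/9 * real m)"
    proof (intro exI[of _ G'] conjI grp allI impI)
      fix M :: real assume M: "M > 0"
      have e1: "Var c M (sorted_insertion xs) = (real m)^2 * (4 + real m) / M"
        using VG[OF M] by (simp add: power_mult_distrib)
      have e2: "Var c M G' = 9 * (real m)^2 / M"
        using VG'[OF M] by (simp add: power_mult_distrib)
      have mp: "real m > 0" using m1 by simp
      have r: "Var c M (sorted_insertion xs) / Var c M G' = (4 + real m) / 9"
        unfolding e1 e2 using M mp by (simp add: field_simps)
      show "1/9 * real m \<le> Var c M (sorted_insertion xs) / Var c M G'" using r by simp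
      show "Var c M (sorted_insertion xs) / Var c M G' \<le> 5/9 * real m" using r m1 by simp
    qed
  qed
qed

end
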